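(* Let $c_3(\alpha)=2\int_0^\infty\ln(z)[1-G_\alpha(z)]g_\alpha(z)\,dz$ and $c_1(\alpha)=\psi(\alpha)$. For estimating $H_M(\underline\theta)$ under squared error loss: (1) every estimator $d_c$ with $c\in[c_3(\alpha),c_1(\alpha)]$ is admissible within the class $\mathcal M_1$; (2) every estimator $d_c$ with $c\in(-\infty,c_3(\alpha))\cup(c_1(\alpha),\infty)$ is inadmissible; (3) if $-\infty<b<c\le c_3(\alpha)$ or $c_1(\alpha)\le c<b<\infty$, then $R_\rho(d_c)<R_\rho(d_b)$ for all $\rho\in(0,1]$.
   Context: Fix a known $\alpha>0$. $X_1,X_2$ are independent, $X_i$ having density $f(x\mid\theta_i)=\frac{x^{\alpha-1}e^{-x/\theta_i}}{\Gamma(\alpha)\theta_i^{\alpha}}$, $x>0$, with unknown $\underline\theta=(\theta_1,\theta_2)\in\Theta=(0,\infty)^2$. $Z_1=\min\{X_1,X_2\}$, $Z_2=\max\{X_1,X_2\}$. $H_M(\underline\theta)=\ln\theta_1\, I(X_1\le X_2)+\ln\theta_2\, I(X_1>X_2)$. $\psi$ is the digamma function; $G_\alpha,g_\alpha$ are the distribution function and density of the gamma distribution with shape $\alpha$, scale $1$. For $c\in\mathbb R$, $d_c(X_1,X_2)=\ln Z_1-c$ and $\mathcal M_1=\{d_c:c\in\mathbb R\}$. Risk: $R(\underline\theta,d)=\mathbb E_{\underline\theta}(d(X_1,X_2)-H_M(\underline\theta))^2$; for $d_c$ it depends on $\underline\theta$ only through $\rho=\min\{\theta_1,\theta_2\}/\max\{\theta_1,\theta_2\}\in(0,1]$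 and is written $R_\rho(d_c)$. $d'$ dominates $d$ if its risk is $\le$ for all $\underline\theta$ and $<$ for some; $d$ is inadmissible if some estimator dominates it; $d\in\mathcal M_1$ is admissible within $\mathcal M_1$ if no member of $\mathcal M_1$ dominates it. *)

theory Defs
  imports "HOL-Probability.Probability"
begin

definition gamma_dens :: "real \<Rightarrow> real \<Rightarrow> real \<Rightarrow> real" where
  "gamma_dens \<alpha> \<theta> x =
     (if 0 < x then x powr (\<alpha> - 1) * exp (- x / \<theta>) / (Gamma \<alpha> * \<theta> powr \<alpha>) else 0)"

definition g_std :: "real \<Rightarrow> real \<Rightarrow> real" where
  "g_std \<alpha> z = gamma_dens \<alpha> 1 z"

definition G_std :: "real \<Rightarrow> real \<Rightarrow> real" where
  "G_std \<alpha> z = (LBINT t:{..z}. g_std \<alpha> t)"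

definition c3 :: "real \<Rightarrow> real" where
  "c3 \<alpha> = 2 * (LBINT z:{0<..}. ln z * (1 - G_std \<alpha> z) * g_std \<alpha> z)"

definition c1 :: "real \<Rightarrow> real" where
  "c1 \<alpha> = Digamma \<alpha>"

definition joint :: "real \<Rightarrow> real \<times> real \<Rightarrow> (real \<times> real) measure" where
  "joint \<alpha> \<theta> = density (lborel \<Otimes>\<^sub>M lborel)
     (\<lambda>(x1, x2). ennreal (gamma_dens \<alpha> (fst \<theta>) x1 * gamma_dens \<alpha> (snd \<theta>) x2))"

definition H_M :: "real \<times> real \<Rightarrow> real \<times> real \<Rightarrow> real" where
  "H_M \<theta> x = (if fst x \<le> snd x then ln (fst \<theta>) else ln (snd \<theta>))"

definition Theta :: "(real \<times> real) set" where
  "Theta = {\<theta>. 0 < fst \<theta> \<and> 0 < snd \<theta>}"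

definition risk :: "real \<Rightarrow> real \<times> real \<Rightarrow> (real \<times> real \<Rightarrow> real) \<Rightarrow> ennreal" where
  "risk \<alpha> \<theta> d = (\<integral>\<^sup>+ x. ennreal ((d x - H_M \<theta> x)\<^sup>2) \<partial>joint \<alpha> \<theta>)"

definition estimator :: "(real \<times> real \<Rightarrow> real) \<Rightarrow> bool" where
  "estimator d \<longleftrightarrow> d \<in> borel_measurable (lborel \<Otimes>\<^sub>M lborel)"

definition dominates :: "real \<Rightarrow> (real \<times> real \<Rightarrow> real) \<Rightarrow> (real \<times> real \<Rightarrow> real) \<Rightarrow> bool" where
  "dominates \<alpha> d' d \<longleftrightarrow>
     (\<forall>\<theta>\<in>Theta. risk \<alpha> \<theta> d' \<le> risk \<alpha> \<theta> d) \<and> (\<exists>\<theta>\<in>Theta. risk \<alpha> \<theta> d' < risk \<alpha> \<theta> d)"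

definition d_c :: "real \<Rightarrow> real \<times> real \<Rightarrow> real" where
  "d_c c x = ln (min (fst x) (snd x)) - c"

definition M1 :: "(real \<times> real \<Rightarrow> real) set" where
  "M1 = range d_c"

definition inadmissible :: "real \<Rightarrow> (real \<times> real \<Rightarrow> real) \<Rightarrow> bool" where
  "inadmissible \<alpha> d \<longleftrightarrow> (\<exists>d'. estimator d' \<and> dominates \<alpha> d' d)"

definition admissible_within_M1 :: "real \<Rightarrow> (real \<times> real \<Rightarrow> real) \<Rightarrow> bool" where
  "admissible_within_M1 \<alpha> d \<longleftrightarrow> d \<in> M1 \<and> \<not> (\<exists>d'\<in>M1. dominates \<alpha> d' d)"

end

theory Submission imports Defs begin



lemma GI:
  assumes "0 < (b::real)"
  shows "(\<integral>\<^sup>+t. ennreal (if 0 < t then t powr (b-1) * exp (-t) else 0) \<partial>lborel) = ennreal (Gamma b)"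
proof -
  have "((\<lambda>t. t powr (b - 1) / exp t) has_integral Gamma b) {0..}"
    using Gamma_integral_real[OF assms] .
  then have "((\<lambda>t. if t \<in> {0..} then t powr (b - 1) / exp t else 0) has_integral Gamma b) UNIV"
    by (subst has_integral_restrict_UNIV)
  moreover have "(\<lambda>t. if t \<in> {0..} then t powr (b - 1) / exp t else 0) = (\<lambda>t::real. if 0 < t then t powr (b-1) * exp (-t) else 0)"
    by (auto simp: fun_eq_iff exp_minus field_simps)
  ultimately have "((\<lambda>t::real. if 0 < t then t powr (b-1) * exp (-t) else 0) has_integral Gamma b) UNIV" by simp
  then show ?thesis
    by (intro nn_integral_has_integral_lborel) auto
qed




definition Gm :: "real \<Rightarrow> real \<Rightarrow> real measure" where
  "Gm a t = density lborel (\<lambda>x. ennreal (gamma_dens a t x))"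

lemma gamma_dens_nonneg: "0 < a \<Longrightarrow> 0 < t \<Longrightarrow> 0 \<le> gamma_dens a t x"
  by (auto simp: gamma_dens_def intro!: divide_nonneg_pos mult_pos_pos Gamma_real_pos)

lemma gamma_dens_meas[measurable]: "gamma_dens a t \<in> borel_measurable borel"
  unfolding gamma_dens_def by measurable

lemma GM:
  assumes a: "0 < a" and ap: "0 < a + p"
  shows "(\<integral>\<^sup>+x. ennreal (g_std a x * x powr p) \<partial>lborel) = ennreal (Gamma (a+p) / Gamma a)"
proof -
  have Gp: "0 < Gamma a" using a by (simp add: Gamma_real_pos)
  have "g_std a x * x powr p = (if 0 < x then x powr ((a+p)-1) * exp (-x) else 0) * (1 / Gamma a)" for x
    by (auto simp: g_std_def gamma_dens_def powr_add[symmetric] exp_minus field_simps)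
  then have "(\<lambda>x. ennreal (g_std a x * x powr p)) = (\<lambda>x. ennreal (if 0 < x then x powr ((a+p)-1) * exp (-x) else 0) * ennreal (1 / Gamma a))"
    using Gp by (auto simp: fun_eq_iff ennreal_mult[symmetric])
  then have "(\<integral>\<^sup>+x. ennreal (g_std a x * x powr p) \<partial>lborel) = (\<integral>\<^sup>+x. ennreal (if 0 < x then x powr ((a+p)-1) * exp (-x) else 0) \<partial>lborel) * ennreal (1 / Gamma a)"
    by (simp add: nn_integral_multc)
  also have "\<dots> = ennreal (Gamma (a+p)) * ennreal (1 / Gamma a)"
    using GI[OF ap] by simp
  also have "\<dots> = ennreal (Gamma (a+p) / Gamma a)"
    using Gp ap by (simp add: ennreal_mult[symmetric] Gamma_real_pos less_imp_le)
  finally show ?thesis .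
qed

lemma G1_total: "0 < a \<Longrightarrow> (\<integral>\<^sup>+x. ennreal (gamma_dens a 1 x) \<partial>lborel) = 1"
proof -
  assume a: "0 < a"
  have "(\<lambda>x. ennreal (gamma_dens a 1 x)) = (\<lambda>x. ennreal (g_std a x * x powr 0))"
    by (auto simp: g_std_def gamma_dens_def fun_eq_iff)
  then show ?thesis using GM[of a 0] a Gamma_real_pos[OF a] by simp
qed

lemma prob_G1: "0 < a \<Longrightarrow> prob_space (Gm a 1)"
  by (rule prob_spaceI) (simp add: Gm_def emeasure_density G1_total)

lemma G_scale:
  assumes a: "0 < a" and t: "0 < t"
  shows "Gm a t = distr (Gm a 1) borel (\<lambda>y. t * y)"
proof (rule measure_eqI)
  show "sets (Gm a t) = sets (distr (Gm a 1) borel (\<lambda>y. t * y))" by (simp add: Gm_def)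
next
  fix A assume "A \<in> sets (Gm a t)"
  then have A[measurable]: "A \<in> sets borel" by (simp add: Gm_def)
  have "emeasure (Gm a t) A = (\<integral>\<^sup>+x. ennreal (gamma_dens a t x) * indicator A x \<partial>lborel)"
    by (simp add: Gm_def emeasure_density)
  also have "\<dots> = ennreal \<bar>t\<bar> * (\<integral>\<^sup>+x. ennreal (gamma_dens a t (0 + t * x)) * indicator A (0 + t * x) \<partial>lborel)"
    by (rule nn_integral_real_affine) (use t in auto)
  also have "\<dots> = (\<integral>\<^sup>+x. ennreal (gamma_dens a 1 x) * indicator A (t * x) \<partial>lborel)"
  proof -
    have "ennreal \<bar>t\<bar> * ennreal (gamma_dens a t (0 + t * x)) = ennreal (gamma_dens a 1 x)" for x
    proof -
      have "\<bar>t\<bar> * gamma_dens a t (t * x) = gamma_dens a 1 x"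
        using t by (auto simp: gamma_dens_def powr_mult zero_less_mult_iff powr_diff field_simps)
      then show ?thesis using t gamma_dens_nonneg[OF a t] by (simp add: ennreal_mult[symmetric])
    qed
    then show ?thesis
      by (subst nn_integral_cmult[symmetric]) (auto simp: mult.assoc[symmetric])
  qed
  also have "\<dots> = emeasure (Gm a 1) ((\<lambda>y. t * y) -` A \<inter> space (Gm a 1))"
  proof -
    have P: "(\<lambda>y. t * y) -` A \<inter> space borel \<in> sets borel" by measurable
    show ?thesis using P by (simp add: Gm_def emeasure_density indicator_def)
  qed
  also have "\<dots> = emeasure (distr (Gm a 1) borel (\<lambda>y. t * y)) A"
    by (subst emeasure_distr) (auto simp: Gm_def)
  finally show "emeasure (Gm a t) A = emeasure (distr (Gm a 1) borel (\<lambda>y. t * y)) A" .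
qed

lemma prob_Gt: "0 < a \<Longrightarrow> 0 < t \<Longrightarrow> prob_space (Gm a t)"
  by (subst G_scale, assumption+, rule prob_space.prob_space_distr[OF prob_G1]) (auto simp: Gm_def)




abbreviation Q :: "real \<Rightarrow> (real \<times> real) measure" where
  "Q a \<equiv> joint a (1,1)"

lemma sf_G: "0 < a \<Longrightarrow> 0 < t \<Longrightarrow> sigma_finite_measure (Gm a t)"
  using prob_Gt by (metis prob_space_imp_sigma_finite)

lemma joint_eq:
  assumes a: "0 < a" and t1: "0 < t1" and t2: "0 < t2"
  shows "joint a (t1, t2) = Gm a t1 \<Otimes>\<^sub>M Gm a t2"
proof -
  have "Gm a t1 \<Otimes>\<^sub>M Gm a t2 = density (lborel \<Otimes>\<^sub>M lborel) (\<lambda>(x,y). ennreal (gamma_dens a t1 x) * ennreal (gamma_dens a t2 y))"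
    unfolding Gm_def
    by (rule pair_measure_density) (use sf_G[OF a t2] in \<open>auto simp: Gm_def intro: lborel.sigma_finite_measure_axioms\<close>)
  also have "\<dots> = joint a (t1, t2)"
    unfolding joint_def using gamma_dens_nonneg[OF a t1] gamma_dens_nonneg[OF a t2]
    by (intro density_cong) (auto simp: ennreal_mult)
  finally show ?thesis by simp
qed

lemma joint_distr:
  assumes a: "0 < a" and t1: "0 < t1" and t2: "0 < t2"
  shows "joint a (t1, t2) = distr (Q a) (borel \<Otimes>\<^sub>M borel) (\<lambda>(x, y). (t1 * x, t2 * y))"
proof -
  have "joint a (t1, t2) = distr (Gm a 1) borel (\<lambda>y. t1 * y) \<Otimes>\<^sub>M distr (Gm a 1) borel (\<lambda>y. t2 * y)"
    using joint_eq[OF a t1 t2] G_scale[OF a t1] G_scale[OF a t2] by simp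
  also have "\<dots> = distr (Gm a 1 \<Otimes>\<^sub>M Gm a 1) (borel \<Otimes>\<^sub>M borel) (\<lambda>(x, y). (t1 * x, t2 * y))"
    by (rule pair_measure_distr) (use sf_G[OF a t2] G_scale[OF a t2] in \<open>auto simp: Gm_def\<close>)
  also have "Gm a 1 \<Otimes>\<^sub>M Gm a 1 = Q a" using joint_eq[OF a] by simp
  finally show ?thesis .
qed

lemma AE_pos: "AE y in Q a. 0 < fst y \<and> 0 < snd y"
  unfolding joint_def
  by (subst AE_density) (auto simp: gamma_dens_def split: prod.splits)

definition W :: "real \<times> real \<Rightarrow> real \<times> real \<Rightarrow> real" where
  "W t y = (if fst t * fst y \<le> snd t * snd y then ln (fst y) else ln (snd y))"

lemma W_meas[measurable]: "W t \<in> borel_measurable (borel \<Otimes>\<^sub>M borel)"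
  unfolding W_def by measurable

lemma risk_eq:
  assumes a: "0 < a" and t: "t \<in> Theta"
  shows "risk a t (d_c c) = (\<integral>\<^sup>+y. ennreal ((W t y - c)\<^sup>2) \<partial>Q a)"
proof -
  obtain t1 t2 where tt: "t = (t1, t2)" and t1: "0 < t1" and t2: "0 < t2"
    using t by (cases t) (auto simp: Theta_def)
  have "risk a t (d_c c) = (\<integral>\<^sup>+x. ennreal ((d_c c x - H_M t x)\<^sup>2) \<partial>distr (Q a) (borel \<Otimes>\<^sub>M borel) (\<lambda>(x, y). (t1 * x, t2 * y)))"
    unfolding risk_def tt joint_distr[OF a t1 t2] ..
  also have "\<dots> = (\<integral>\<^sup>+y. ennreal ((d_c c ((\<lambda>(x, y). (t1 * x, t2 * y)) y) - H_M t ((\<lambda>(x, y). (t1 * x, t2 * y)) y))\<^sup>2) \<partial>Q a)"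
    by (subst nn_integral_distr) (auto simp: d_c_def H_M_def joint_def)
  also have "\<dots> = (\<integral>\<^sup>+y. ennreal ((W t y - c)\<^sup>2) \<partial>Q a)"
  proof (rule nn_integral_cong_AE)
    show "AE y in Q a. ennreal ((d_c c ((\<lambda>(x, y). (t1 * x, t2 * y)) y) - H_M t ((\<lambda>(x, y). (t1 * x, t2 * y)) y))\<^sup>2) = ennreal ((W t y - c)\<^sup>2)"
      using AE_pos[of a]
    proof eventually_elim
      case (elim y)
      then show ?case using t1 t2
        by (cases y) (auto simp: d_c_def H_M_def W_def tt ln_mult min_def)
    qed
  qed
  finally show ?thesis .
qed




lemma AE_G1pos: "AE x in Gm a 1. 0 < x"
  unfolding Gm_def by (subst AE_density) (auto simp: gamma_dens_def)

lemma nn_powr: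
  assumes a: "0 < a" and ap: "0 < a + p"
  shows "(\<integral>\<^sup>+x. ennreal (x powr p) \<partial>Gm a 1) = ennreal (Gamma (a+p) / Gamma a)"
proof -
  have "(\<integral>\<^sup>+x. ennreal (x powr p) \<partial>Gm a 1) = (\<integral>\<^sup>+x. ennreal (g_std a x * x powr p) \<partial>lborel)"
    unfolding Gm_def
    by (subst nn_integral_density) (auto simp: g_std_def ennreal_mult gamma_dens_nonneg[OF a])
  then show ?thesis using GM[OF a ap] by simp
qed

lemma int_powr:
  assumes a: "0 < a" and ap: "0 < a + p"
  shows "integrable (Gm a 1) (\<lambda>x. x powr p)" "(\<integral>x. x powr p \<partial>Gm a 1) = Gamma (a+p) / Gamma a"
proof -
  show I: "integrable (Gm a 1) (\<lambda>x. x powr p)"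
  proof (rule integrableI_nonneg)
    show "(\<lambda>x. x powr p) \<in> borel_measurable (Gm a 1)" by (simp add: Gm_def)
    show "AE x in Gm a 1. 0 \<le> x powr p" by simp
    show "(\<integral>\<^sup>+x. ennreal (x powr p) \<partial>Gm a 1) < \<infinity>" by (simp add: nn_powr[OF a ap])
  qed
  have "(\<integral>x. x powr p \<partial>Gm a 1) = enn2real (\<integral>\<^sup>+x. ennreal (x powr p) \<partial>Gm a 1)"
    by (rule integral_eq_nn_integral) (auto simp: Gm_def)
  then show "(\<integral>x. x powr p \<partial>Gm a 1) = Gamma (a+p) / Gamma a"
    using nn_powr[OF a ap] a ap by (simp add: Gamma_real_pos less_imp_le)
qed

lemma ln_sq_bound:
  fixes x d :: real
  assumes x: "0 < x" and d: "0 < d"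
  shows "(ln x)\<^sup>2 \<le> (4 / d\<^sup>2) * (x powr d + x powr (-d))"
proof -
  define u where "u = (d/2) * ln x"
  have "\<bar>u\<bar> \<le> exp \<bar>u\<bar>" using exp_ge_add_one_self[of "\<bar>u\<bar>"] by linarith
  then have "\<bar>u\<bar>\<^sup>2 \<le> (exp \<bar>u\<bar>)\<^sup>2" by (intro power_mono) auto
  also have "(exp \<bar>u\<bar>)\<^sup>2 = exp (2 * \<bar>u\<bar>)" by (simp add: power2_eq_square exp_add[symmetric])
  also have "\<dots> \<le> exp (2*u) + exp (-2*u)" by (cases "0 \<le> u") auto
  also have "exp (2*u) = x powr d" using x by (simp add: u_def powr_def)
  also have "exp (-2*u) = x powr (-d)" using x by (simp add: u_def powr_def)
  finally have "u\<^sup>2 \<le> x powr d + x powr (-d)" by simp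
  moreover have "u\<^sup>2 = (d/2)\<^sup>2 * (ln x)\<^sup>2" by (simp add: u_def power2_eq_square)
  ultimately have "(d/2)\<^sup>2 * (ln x)\<^sup>2 \<le> x powr d + x powr (-d)" by simp
  then show ?thesis using d by (simp add: field_simps power2_eq_square)
qed

lemma int_lnsq:
  assumes a: "0 < a"
  shows "integrable (Gm a 1) (\<lambda>x. (ln x)\<^sup>2)"
proof (rule Bochner_Integration.integrable_bound)
  let ?d = "a/2"
  show "integrable (Gm a 1) (\<lambda>x. (4 / ?d\<^sup>2) * (x powr ?d + x powr (-?d)))"
    using int_powr(1)[OF a, of "?d"] int_powr(1)[OF a, of "-?d"] a by auto
  show "(\<lambda>x. (ln x)\<^sup>2) \<in> borel_measurable (Gm a 1)" by (simp add: Gm_def)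
  show "AE x in Gm a 1. norm ((ln x)\<^sup>2) \<le> norm ((4 / ?d\<^sup>2) * (x powr ?d + x powr (-?d)))"
    using AE_G1pos[of a]
  proof eventually_elim
    case (elim x)
    then show ?case using ln_sq_bound[OF elim, of ?d] a by auto
  qed
qed

lemma int_ln:
  assumes a: "0 < a"
  shows "integrable (Gm a 1) ln"
proof (rule Bochner_Integration.integrable_bound)
  show "integrable (Gm a 1) (\<lambda>x. 1 + (ln x)\<^sup>2)"
    by (intro Bochner_Integration.integrable_add int_lnsq[OF a] finite_measure.integrable_const[OF prob_space.finite_measure[OF prob_G1[OF a]]])
  show "ln \<in> borel_measurable (Gm a 1)" by (simp add: Gm_def)
  show "AE x in Gm a 1. norm (ln x) \<le> norm (1 + (ln x)\<^sup>2)"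
  proof (rule AE_I2)
    fix x :: real
    have h: "(\<bar>ln x\<bar> - 1)\<^sup>2 = (ln x)\<^sup>2 - 2*\<bar>ln x\<bar> + 1" by (simp add: power2_diff power2_abs)
    have "\<bar>ln x\<bar> \<le> 1 + (ln x)\<^sup>2" using zero_le_power2[of "\<bar>ln x\<bar> - 1"] h zero_le_power2[of "ln x"] by linarith
    then show "norm (ln x) \<le> norm (1 + (ln x)\<^sup>2)" by auto
  qed
qed

lemma Q_eq: "0 < a \<Longrightarrow> Q a = Gm a 1 \<Otimes>\<^sub>M Gm a 1"
  using joint_eq[of a 1 1] by simp

lemma prob_Q: "0 < a \<Longrightarrow> prob_space (Q a)"
  by (simp add: Q_eq prob_G1 prob_space_pair)

lemma distr_snd:
  assumes "prob_space N" "prob_space M"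
  shows "distr (N \<Otimes>\<^sub>M M) M snd = M"
proof (intro measure_eqI)
  interpret N: prob_space N by fact
  interpret M: prob_space M by fact
  interpret pair_sigma_finite N M ..
  fix A assume A: "A \<in> sets (distr (N \<Otimes>\<^sub>M M) M snd)"
  from A have "emeasure (distr (N \<Otimes>\<^sub>M M) M snd) A = emeasure (N \<Otimes>\<^sub>M M) (space N \<times> A)"
    by (auto simp add: emeasure_distr space_pair_measure dest: sets.sets_into_space intro!: arg_cong2[where f=emeasure])
  with A show "emeasure (distr (N \<Otimes>\<^sub>M M) M snd) A = emeasure M A"
    by (simp add: M.emeasure_pair_measure_Times N.emeasure_space_1)
qed simp

lemma distr_Q_fst: "0 < a \<Longrightarrow> distr (Q a) borel fst = Gm a 1"
proof -
  assume a: "0 < a"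
  have "distr (Q a) borel fst = distr (Q a) (Gm a 1) fst" by (rule distr_cong) (auto simp: Gm_def)
  then show ?thesis using prob_space.distr_pair_fst[OF prob_G1[OF a], of "Gm a 1"] by (simp add: Q_eq[OF a])
qed

lemma distr_Q_snd: "0 < a \<Longrightarrow> distr (Q a) borel snd = Gm a 1"
proof -
  assume a: "0 < a"
  have "distr (Q a) borel snd = distr (Q a) (Gm a 1) snd" by (rule distr_cong) (auto simp: Gm_def)
  then show ?thesis using distr_snd[OF prob_G1[OF a] prob_G1[OF a]] by (simp add: Q_eq[OF a])
qed

lemma Q_fst:
  fixes f :: "real \<Rightarrow> real"
  assumes a: "0 < a" and f[measurable]: "f \<in> borel_measurable borel" and i: "integrable (Gm a 1) f"
  shows "integrable (Q a) (\<lambda>y. f (fst y))" "(\<integral>y. f (fst y) \<partial>Q a) = (\<integral>x. f x \<partial>Gm a 1)"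
proof -
  have m: "fst \<in> measurable (Q a) borel" by (simp add: joint_def)
  show "integrable (Q a) (\<lambda>y. f (fst y))"
    using i integrable_distr_eq[OF m f] distr_Q_fst[OF a] by simp
  show "(\<integral>y. f (fst y) \<partial>Q a) = (\<integral>x. f x \<partial>Gm a 1)"
    using integral_distr[OF m f] distr_Q_fst[OF a] by simp
qed

lemma Q_snd:
  fixes f :: "real \<Rightarrow> real"
  assumes a: "0 < a" and f[measurable]: "f \<in> borel_measurable borel" and i: "integrable (Gm a 1) f"
  shows "integrable (Q a) (\<lambda>y. f (snd y))" "(\<integral>y. f (snd y) \<partial>Q a) = (\<integral>x. f x \<partial>Gm a 1)"
proof -
  have m: "snd \<in> measurable (Q a) borel" by (simp add: joint_def)
  show "integrable (Q a) (\<lambda>y. f (snd y))"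
    using i integrable_distr_eq[OF m f] distr_Q_snd[OF a] by simp
  show "(\<integral>y. f (snd y) \<partial>Q a) = (\<integral>x. f x \<partial>Gm a 1)"
    using integral_distr[OF m f] distr_Q_snd[OF a] by simp
qed




lemma deriv_seq:
  fixes f :: "real \<Rightarrow> real"
  assumes D: "(f has_field_derivative D) (at x0)" and h: "h \<longlonglongrightarrow> 0" and hn: "\<And>n. h n \<noteq> 0"
  shows "(\<lambda>n. (f (x0 + h n) - f x0) / h n) \<longlonglongrightarrow> D"
proof -
  have L: "((\<lambda>y. (f y - f x0) / (y - x0)) \<longlongrightarrow> D) (at x0)"
    using D by (simp add: has_field_derivative_iff)
  have F: "filterlim (\<lambda>n. x0 + h n) (at x0) sequentially"
  proof (rule filterlim_atI)
    show "((\<lambda>n. x0 + h n) \<longlongrightarrow> x0) sequentially" using tendsto_add[OF tendsto_const h] by simp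
    show "\<forall>\<^sub>F n in sequentially. x0 + h n \<noteq> x0" using hn by simp
  qed
  have "(\<lambda>n. (f (x0 + h n) - f x0) / (x0 + h n - x0)) \<longlonglongrightarrow> D"
    using filterlim_compose[OF L F] by (simp add: o_def)
  then show ?thesis by simp
qed

lemma powr_bounds:
  fixes x h d :: real
  assumes x: "0 < x" and h: "0 < h" "h \<le> d"
  shows "ln x \<le> (x powr h - 1) / h" "(x powr h - 1) / h \<le> (x powr d - 1) / d"
proof -
  have "ln (x powr h) \<le> x powr h - 1" using x by (intro ln_le_minus_one) simp
  then have "h * ln x \<le> x powr h - 1" using x by (simp add: ln_powr)
  then show "ln x \<le> (x powr h - 1) / h" using h by (simp add: field_simps)
  define t where "t = h / d"
  have t: "0 \<le> t" "t \<le> 1" using h by (auto simp: t_def)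
  have "exp ((1 - t) *\<^sub>R 0 + t *\<^sub>R (d * ln x)) \<le> (1 - t) * exp 0 + t * exp (d * ln x)"
    by (rule convex_onD[OF exp_convex]) (use t in auto)
  moreover have "t * (d * ln x) = h * ln x" using h by (simp add: t_def)
  ultimately have "x powr h \<le> (1 - t) + t * x powr d" using x by (simp add: powr_def mult.commute)
  then have "x powr h - 1 \<le> t * (x powr d - 1)" by (simp add: algebra_simps)
  then show "(x powr h - 1) / h \<le> (x powr d - 1) / d" using h by (simp add: t_def field_simps)
qed

lemma E_ln:
  assumes a: "0 < a"
  shows "(\<integral>x. ln x \<partial>Gm a 1) = Digamma a"
proof -
  interpret G: prob_space "Gm a 1" by (rule prob_G1[OF a])
  define d where "d = a / 2"
  have d: "0 < d" "d < a" using a by (auto simp: d_def)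
  define h where "h n = d / real (Suc n)" for n
  have hpos: "0 < h n" for n using d by (simp add: h_def)
  have hled: "h n \<le> d" for n using d by (simp add: h_def field_simps)
  have h0: "h \<longlonglongrightarrow> 0" unfolding h_def using LIMSEQ_Suc[OF lim_const_over_n[of d]] by simp
  define s where "s n x = (x powr h n - 1) / h n" for n x
  have Ga: "0 < Gamma a" using a by (simp add: Gamma_real_pos)
  have int_s: "(\<integral>x. s n x \<partial>Gm a 1) = (Gamma (a + h n) - Gamma a) / h n / Gamma a" for n
  proof -
    have "(\<integral>x. s n x \<partial>Gm a 1) = ((\<integral>x. x powr h n \<partial>Gm a 1) - 1) / h n"
      unfolding s_def
      using int_powr(1)[OF a, of "h n"] hpos[of n] a by (simp add: G.prob_space)
    also have "\<dots> = (Gamma (a + h n) - Gamma a) / h n / Gamma a"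
    proof -
      have "(Gamma (a + h n) / Gamma a - 1) / h n = (Gamma (a + h n) - Gamma a) / h n / Gamma a"
        using Ga by (simp add: field_simps)
      then show ?thesis using int_powr(2)[OF a, of "h n"] hpos[of n] a by simp
    qed
    finally show ?thesis .
  qed
  have "(\<lambda>n. (Gamma (a + h n) - Gamma a) / h n) \<longlonglongrightarrow> Gamma a * Digamma a"
  proof (rule deriv_seq[OF _ h0])
    show "(Gamma has_field_derivative Gamma a * Digamma a) (at a)"
      by (rule has_field_derivative_Gamma) (use a nonpos_Ints_nonpos in force)
    show "h n \<noteq> 0" for n using hpos[of n] by simp
  qed
  then have lim1: "(\<lambda>n. (\<integral>x. s n x \<partial>Gm a 1)) \<longlonglongrightarrow> Digamma a"
    using tendsto_divide[OF _ tendsto_const[of "Gamma a"]] Ga unfolding int_s by force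
  have lim2: "(\<lambda>n. (\<integral>x. s n x \<partial>Gm a 1)) \<longlonglongrightarrow> (\<integral>x. ln x \<partial>Gm a 1)"
  proof (rule integral_dominated_convergence[where w="\<lambda>x. \<bar>ln x\<bar> + \<bar>(x powr d - 1) / d\<bar>"])
    show "ln \<in> borel_measurable (Gm a 1)" by (simp add: Gm_def)
    show "s n \<in> borel_measurable (Gm a 1)" for n unfolding Gm_def s_def by measurable
    show "integrable (Gm a 1) (\<lambda>x. \<bar>ln x\<bar> + \<bar>(x powr d - 1) / d\<bar>)"
      using int_ln[OF a] int_powr(1)[OF a, of d] d by (intro Bochner_Integration.integrable_add integrable_abs) auto
    show "AE x in Gm a 1. (\<lambda>n. s n x) \<longlonglongrightarrow> ln x"
      using AE_G1pos[of a]
    proof eventually_elim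
      case (elim x)
      have D: "((\<lambda>y. x powr y) has_field_derivative ln x) (at 0)"
      proof -
        have "((\<lambda>y. exp (y * ln x)) has_field_derivative exp (0 * ln x) * (1 * ln x)) (at 0)"
          by (auto intro!: derivative_eq_intros)
        moreover have "(\<lambda>y. exp (y * ln x)) = (\<lambda>y. x powr y)"
          using elim by (auto simp: powr_def fun_eq_iff mult.commute)
        ultimately show ?thesis by simp
      qed
      show ?case using deriv_seq[OF D h0] hpos elim unfolding s_def by (simp add: less_imp_neq[symmetric])
    qed
    show "AE x in Gm a 1. norm (s n x) \<le> \<bar>ln x\<bar> + \<bar>(x powr d - 1) / d\<bar>" for n
      using AE_G1pos[of a]
    proof eventually_elim
      case (elim x)
      have sw: "\<bar>v\<bar> \<le> \<bar>l\<bar> + \<bar>u\<bar>" if "l \<le> v" "v \<le> u" for l v u :: real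
        using that by linarith
      show ?case using sw[OF powr_bounds[OF elim hpos[of n] hled[of n]]] unfolding s_def real_norm_def .
    qed
  qed
  from LIMSEQ_unique[OF lim2 lim1] show ?thesis .
qed




lemma sets_Q: "sets (Q a) = sets (borel \<Otimes>\<^sub>M borel)"
  by (simp add: joint_def)

lemma W_measQ[measurable]: "W t \<in> borel_measurable (Q a)"
  using W_meas measurable_cong_sets[OF sets_Q refl] by blast

lemma lnfst_int: "0 < a \<Longrightarrow> integrable (Q a) (\<lambda>y. ln (fst y))"
  using Q_fst(1)[of a ln] int_ln by simp
lemma lnsnd_int: "0 < a \<Longrightarrow> integrable (Q a) (\<lambda>y. ln (snd y))"
  using Q_snd(1)[of a ln] int_ln by simp
lemma lnfst_sq_int: "0 < a \<Longrightarrow> integrable (Q a) (\<lambda>y. (ln (fst y))\<^sup>2)"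
  using Q_fst(1)[of a "\<lambda>x. (ln x)\<^sup>2"] int_lnsq by simp
lemma lnsnd_sq_int: "0 < a \<Longrightarrow> integrable (Q a) (\<lambda>y. (ln (snd y))\<^sup>2)"
  using Q_snd(1)[of a "\<lambda>x. (ln x)\<^sup>2"] int_lnsq by simp

lemma lnfst_E: "0 < a \<Longrightarrow> (\<integral>y. ln (fst y) \<partial>Q a) = c1 a"
  using Q_fst(2)[of a ln] int_ln E_ln by (simp add: c1_def)
lemma lnsnd_E: "0 < a \<Longrightarrow> (\<integral>y. ln (snd y) \<partial>Q a) = c1 a"
  using Q_snd(2)[of a ln] int_ln E_ln by (simp add: c1_def)

lemma int_bound2:
  fixes f :: "real \<times> real \<Rightarrow> real"
  assumes a: "0 < a" and f[measurable]: "f \<in> borel_measurable (borel \<Otimes>\<^sub>M borel)"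
    and b: "\<And>y. \<bar>f y\<bar> \<le> \<bar>ln (fst y)\<bar> + \<bar>ln (snd y)\<bar>"
  shows "integrable (Q a) f" "integrable (Q a) (\<lambda>y. (f y)\<^sup>2)"
proof -
  have fm: "f \<in> borel_measurable (Q a)" using f measurable_cong_sets[OF sets_Q refl] by blast
  show "integrable (Q a) f"
  proof (rule Bochner_Integration.integrable_bound[OF _ fm])
    show "integrable (Q a) (\<lambda>y. \<bar>ln (fst y)\<bar> + \<bar>ln (snd y)\<bar>)"
      using lnfst_int[OF a] lnsnd_int[OF a] by auto
    show "AE y in Q a. norm (f y) \<le> norm (\<bar>ln (fst y)\<bar> + \<bar>ln (snd y)\<bar>)" using b by auto
  qed
  show "integrable (Q a) (\<lambda>y. (f y)\<^sup>2)"
  proof (rule Bochner_Integration.integrable_bound)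
    show "integrable (Q a) (\<lambda>y. 2 * (ln (fst y))\<^sup>2 + 2 * (ln (snd y))\<^sup>2)"
      using lnfst_sq_int[OF a] lnsnd_sq_int[OF a] by auto
    show "(\<lambda>y. (f y)\<^sup>2) \<in> borel_measurable (Q a)" using fm by measurable
    show "AE y in Q a. norm ((f y)\<^sup>2) \<le> norm (2 * (ln (fst y))\<^sup>2 + 2 * (ln (snd y))\<^sup>2)"
    proof (rule AE_I2)
      fix y :: "real \<times> real"
      let ?u = "\<bar>ln (fst y)\<bar>" and ?v = "\<bar>ln (snd y)\<bar>"
      have "(f y)\<^sup>2 = \<bar>f y\<bar>\<^sup>2" by simp
      also have "\<dots> \<le> (?u + ?v)\<^sup>2" using b[of y] by (intro power_mono) auto
      also have "\<dots> \<le> 2 * ?u\<^sup>2 + 2 * ?v\<^sup>2" using zero_le_power2[of "?u - ?v"]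
        by (simp add: power2_sum power2_diff)
      finally show "norm ((f y)\<^sup>2) \<le> norm (2 * (ln (fst y))\<^sup>2 + 2 * (ln (snd y))\<^sup>2)" by simp
    qed
  qed
qed

lemma W_bound: "\<bar>W t y\<bar> \<le> \<bar>ln (fst y)\<bar> + \<bar>ln (snd y)\<bar>"
  by (auto simp: W_def)

definition mW where "mW a t = (\<integral>y. W t y \<partial>Q a)"
definition VW where "VW a t = (\<integral>y. (W t y)\<^sup>2 \<partial>Q a)"

lemma risk_R:
  assumes a: "0 < a" and t: "t \<in> Theta"
  shows "risk a t (d_c c) = ennreal (VW a t - 2 * c * mW a t + c\<^sup>2)"
    "0 \<le> VW a t - 2 * c * mW a t + c\<^sup>2"
proof -
  interpret P: prob_space "Q a" by (rule prob_Q[OF a])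
  note I = int_bound2[OF a W_meas W_bound]
  have eqf: "(\<lambda>y. (W t y - c)\<^sup>2) = (\<lambda>y. (W t y)\<^sup>2 - 2 * c * W t y + c\<^sup>2)"
    by (simp add: fun_eq_iff power2_diff)
  have Ic: "integrable (Q a) (\<lambda>y. (W t y - c)\<^sup>2)"
    unfolding eqf using I by auto
  have E: "(\<integral>y. (W t y - c)\<^sup>2 \<partial>Q a) = VW a t - 2 * c * mW a t + c\<^sup>2"
    unfolding eqf VW_def mW_def using I by (simp add: P.prob_space)
  show "risk a t (d_c c) = ennreal (VW a t - 2 * c * mW a t + c\<^sup>2)"
    unfolding risk_eq[OF a t] E[symmetric] by (rule nn_integral_eq_integral[OF Ic]) auto
  show "0 \<le> VW a t - 2 * c * mW a t + c\<^sup>2"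
    unfolding E[symmetric] by (rule integral_nonneg_AE) auto
qed

lemma risk_less:
  assumes a: "0 < a" and t: "t \<in> Theta"
  shows "risk a t (d_c c) < risk a t (d_c b) \<longleftrightarrow> (c - mW a t)\<^sup>2 < (b - mW a t)\<^sup>2"
proof -
  have "risk a t (d_c c) < risk a t (d_c b) \<longleftrightarrow> VW a t - 2 * c * mW a t + c\<^sup>2 < VW a t - 2 * b * mW a t + b\<^sup>2"
    unfolding risk_R(1)[OF a t] using risk_R(2)[OF a t, of c] by (simp add: ennreal_less_iff)
  also have "\<dots> \<longleftrightarrow> (c - mW a t)\<^sup>2 < (b - mW a t)\<^sup>2" by (simp add: power2_diff)
  finally show ?thesis .
qed

lemma risk_le:
  assumes a: "0 < a" and t: "t \<in> Theta"
  shows "risk a t (d_c c) \<le> risk a t (d_c b) \<longleftrightarrow> (c - mW a t)\<^sup>2 \<le> (b - mW a t)\<^sup>2"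
proof -
  have "risk a t (d_c c) \<le> risk a t (d_c b) \<longleftrightarrow> VW a t - 2 * c * mW a t + c\<^sup>2 \<le> VW a t - 2 * b * mW a t + b\<^sup>2"
    unfolding risk_R(1)[OF a t] using risk_R(2)[OF a t, of c] risk_R(2)[OF a t, of b] by (simp add: ennreal_le_iff2) linarith
  also have "\<dots> \<longleftrightarrow> (c - mW a t)\<^sup>2 \<le> (b - mW a t)\<^sup>2" by (simp add: power2_diff)
  finally show ?thesis .
qed




lemma lnmin_int: "0 < a \<Longrightarrow> integrable (Q a) (\<lambda>y. ln (min (fst y) (snd y)))"
  by (rule int_bound2(1)) (auto simp: min_def)

lemma W_int: "0 < a \<Longrightarrow> integrable (Q a) (W t)"
  using int_bound2(1)[OF _ W_meas W_bound] by blast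

lemma mW_le_c1:
  assumes a: "0 < a" and t: "t \<in> Theta"
  shows "mW a t \<le> c1 a"
proof -
  obtain t1 t2 where tt: "t = (t1, t2)" and t1: "0 < t1" and t2: "0 < t2"
    using t by (cases t) (auto simp: Theta_def)
  show ?thesis
  proof (cases "t1 \<le> t2")
    case True
    have "mW a t \<le> (\<integral>y. ln (fst y) \<partial>Q a)"
      unfolding mW_def
    proof (rule integral_mono_AE[OF W_int[OF a] lnfst_int[OF a]])
      show "AE y in Q a. W t y \<le> ln (fst y)"
        using AE_pos[of a]
      proof eventually_elim
        case (elim y)
        show ?case
        proof (cases "t1 * fst y \<le> t2 * snd y")
          case False
          then have "t2 * snd y < t2 * fst y" using True elim mult_right_mono[OF True, of "fst y"] by linarith
          then have "snd y < fst y" using t2 by simp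
          then show ?thesis using False elim by (simp add: W_def tt)
        qed (simp add: W_def tt)
      qed
    qed
    then show ?thesis using lnfst_E[OF a] by simp
  next
    case False
    have "mW a t \<le> (\<integral>y. ln (snd y) \<partial>Q a)"
      unfolding mW_def
    proof (rule integral_mono_AE[OF W_int[OF a] lnsnd_int[OF a]])
      show "AE y in Q a. W t y \<le> ln (snd y)"
        using AE_pos[of a]
      proof eventually_elim
        case (elim y)
        show ?case
        proof (cases "t1 * fst y \<le> t2 * snd y")
          case True
          then have "t1 * fst y \<le> t1 * snd y" using False elim mult_right_mono[of t2 t1 "snd y"] by linarith
          then have "fst y \<le> snd y" using t1 by simp
          then show ?thesis using True elim by (simp add: W_def tt)
        qed (simp add: W_def tt)
      qed
    qed
    then show ?thesis using lnsnd_E[OF a] by simp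
  qed
qed

lemma mW_ge:
  assumes a: "0 < a"
  shows "(\<integral>y. ln (min (fst y) (snd y)) \<partial>Q a) \<le> mW a t"
  unfolding mW_def
proof (rule integral_mono_AE[OF lnmin_int[OF a] W_int[OF a]])
  show "AE y in Q a. ln (min (fst y) (snd y)) \<le> W t y"
    using AE_pos[of a] by eventually_elim (auto simp: W_def min_def)
qed

lemma mW_11: "mW a (1,1) = (\<integral>y. ln (min (fst y) (snd y)) \<partial>Q a)"
  unfolding mW_def by (rule Bochner_Integration.integral_cong) (auto simp: W_def min_def)

lemma mW_lim:
  assumes a: "0 < a"
  shows "(\<lambda>n. mW a (1, real (Suc n))) \<longlonglongrightarrow> c1 a"
proof -
  have "(\<lambda>n. mW a (1, real (Suc n))) \<longlonglongrightarrow> (\<integral>y. ln (fst y) \<partial>Q a)"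
    unfolding mW_def
  proof (rule integral_dominated_convergence[where w="\<lambda>y. \<bar>ln (fst y)\<bar> + \<bar>ln (snd y)\<bar>"])
    show "(\<lambda>y. ln (fst y)) \<in> borel_measurable (Q a)" by (simp add: joint_def)
    show "W (1, real (Suc n)) \<in> borel_measurable (Q a)" for n by simp
    show "integrable (Q a) (\<lambda>y. \<bar>ln (fst y)\<bar> + \<bar>ln (snd y)\<bar>)"
      using lnfst_int[OF a] lnsnd_int[OF a] by auto
    show "AE y in Q a. norm (W (1, real (Suc n)) y) \<le> \<bar>ln (fst y)\<bar> + \<bar>ln (snd y)\<bar>" for n
      using W_bound by auto
    show "AE y in Q a. (\<lambda>n. W (1, real (Suc n)) y) \<longlonglongrightarrow> ln (fst y)"
      using AE_pos[of a]
    proof eventually_elim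
      case (elim y)
      obtain N where N: "fst y / snd y \<le> real N" using real_arch_simple by blast
      have "\<forall>\<^sub>F n in sequentially. W (1, real (Suc n)) y = ln (fst y)"
        unfolding eventually_sequentially
      proof (intro exI allI impI)
        fix n assume "N \<le> n"
        then have "fst y / snd y \<le> real (Suc n)" using N by linarith
        then have "fst y \<le> real (Suc n) * snd y" using elim by (simp add: field_simps)
        then show "W (1, real (Suc n)) y = ln (fst y)" by (simp add: W_def)
      qed
      then show ?case by (rule tendsto_eventually)
    qed
  qed
  then show ?thesis using lnfst_E[OF a] by simp
qed




lemma space_G1[simp]: "space (Gm a t) = UNIV" by (simp add: Gm_def)
lemma sets_G1[simp]: "sets (Gm a t) = sets borel" by (simp add: Gm_def)

lemma G_std_eq: "0 < a \<Longrightarrow> measure (Gm a 1) {..z} = G_std a z"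
proof -
  assume a: "0 < a"
  have "measure (Gm a 1) {..z} = (\<integral>x. indicator {..z} x \<partial>Gm a 1)" by simp
  also have "\<dots> = (\<integral>x. gamma_dens a 1 x *\<^sub>R indicator {..z} x \<partial>lborel)"
    unfolding Gm_def by (rule integral_density) (auto simp: gamma_dens_nonneg[OF a])
  also have "\<dots> = G_std a z"
    unfolding G_std_def set_lebesgue_integral_def g_std_def by (simp add: mult.commute)
  finally show ?thesis .
qed

lemma G_single: "0 < a \<Longrightarrow> measure (Gm a 1) {z} = 0"
proof -
  have "AE x in lborel. x \<in> {z} \<longrightarrow> ennreal (gamma_dens a 1 x) = 0"
    using AE_lborel_singleton[of z] by eventually_elim auto
  then have "{z} \<in> null_sets (Gm a 1)"
    unfolding Gm_def by (subst null_sets_density_iff) auto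
  then show ?thesis by (simp add: measure_def null_setsD1)
qed

lemma G_ge: "0 < a \<Longrightarrow> measure (Gm a 1) {z..} = 1 - G_std a z"
proof -
  assume a: "0 < a"
  interpret G: prob_space "Gm a 1" by (rule prob_G1[OF a])
  have "measure (Gm a 1) {z..} = measure (Gm a 1) (space (Gm a 1) - {..<z})"
    by (auto intro!: arg_cong[where f="measure _"])
  also have "\<dots> = 1 - measure (Gm a 1) {..<z}" by (rule G.prob_compl) auto
  also have "measure (Gm a 1) {..<z} = measure (Gm a 1) {..z}"
  proof -
    have "measure (Gm a 1) {..z} = measure (Gm a 1) ({..<z} \<union> {z})" by (auto intro!: arg_cong[where f="measure _"])
    also have "\<dots> = measure (Gm a 1) {..<z} + measure (Gm a 1) {z}"
      by (rule G.finite_measure_Union) auto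
    finally show ?thesis using G_single[OF a] by simp
  qed
  finally show ?thesis using G_std_eq[OF a] by simp
qed

lemma G_gt: "0 < a \<Longrightarrow> measure (Gm a 1) {z<..} = 1 - G_std a z"
proof -
  assume a: "0 < a"
  interpret G: prob_space "Gm a 1" by (rule prob_G1[OF a])
  have "measure (Gm a 1) {z<..} = measure (Gm a 1) (space (Gm a 1) - {..z})"
    by (auto intro!: arg_cong[where f="measure _"])
  also have "\<dots> = 1 - measure (Gm a 1) {..z}" by (rule G.prob_compl) auto
  finally show ?thesis using G_std_eq[OF a] by simp
qed

lemma G_std_meas[measurable]: "0 < a \<Longrightarrow> G_std a \<in> borel_measurable borel"
proof -
  assume a: "0 < a"
  interpret G: prob_space "Gm a 1" by (rule prob_G1[OF a])
  have "mono (G_std a)"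
    unfolding mono_def using G_std_eq[OF a] by (metis G.finite_measure_mono atMost_iff atMost_subset_iff sets_G1 sets_lborel measurable_sets_borel borel_closed closed_atMost)
  then show ?thesis by (rule borel_measurable_mono)
qed

lemma c3_eq:
  assumes a: "0 < a"
  shows "(\<integral>y. ln (min (fst y) (snd y)) \<partial>Q a) = c3 a"
proof -
  interpret G: prob_space "Gm a 1" by (rule prob_G1[OF a])
  interpret PS: pair_sigma_finite "Gm a 1" "Gm a 1" ..
  let ?h = "\<lambda>z. ln z * (1 - G_std a z)"
  define f1 where "f1 y1 y2 = (if y1 \<le> y2 then ln y1 else 0)" for y1 y2 :: real
  define f2 where "f2 y1 y2 = (if y2 < y1 then ln y2 else 0)" for y1 y2 :: real
  have f1m: "case_prod f1 \<in> borel_measurable (borel \<Otimes>\<^sub>M borel)" unfolding f1_def by measurable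
  have f2m: "case_prod f2 \<in> borel_measurable (borel \<Otimes>\<^sub>M borel)" unfolding f2_def by measurable
  have I1: "integrable (Q a) (case_prod f1)"
    by (rule int_bound2(1)[OF a f1m]) (auto simp: f1_def)
  have I2: "integrable (Q a) (case_prod f2)"
    by (rule int_bound2(1)[OF a f2m]) (auto simp: f2_def)
  have QG: "Q a = Gm a 1 \<Otimes>\<^sub>M Gm a 1" by (rule Q_eq[OF a])
  have split: "(\<integral>y. ln (min (fst y) (snd y)) \<partial>Q a) = (\<integral>y. case_prod f1 y \<partial>Q a) + (\<integral>y. case_prod f2 y \<partial>Q a)"
  proof -
    have "(\<lambda>y. ln (min (fst y) (snd y))) = (\<lambda>y. case_prod f1 y + case_prod f2 y)"
      by (auto simp: fun_eq_iff f1_def f2_def min_def)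
    then show ?thesis using I1 I2 by simp
  qed
  have E1: "(\<integral>y. case_prod f1 y \<partial>Q a) = (\<integral>z. ?h z \<partial>Gm a 1)"
  proof -
    have "(\<integral>y. case_prod f1 y \<partial>Q a) = (\<integral>x. (\<integral>y. f1 x y \<partial>Gm a 1) \<partial>Gm a 1)"
      using PS.integral_fst[of f1] I1 QG by simp
    also have "\<dots> = (\<integral>z. ?h z \<partial>Gm a 1)"
    proof (rule Bochner_Integration.integral_cong[OF refl])
      fix x
      have "(\<integral>y. f1 x y \<partial>Gm a 1) = (\<integral>y. ln x * indicator {x..} y \<partial>Gm a 1)"
        by (rule Bochner_Integration.integral_cong) (auto simp: f1_def indicator_def)
      also have "\<dots> = ln x * measure (Gm a 1) {x..}" by simp
      finally show "(\<integral>y. f1 x y \<partial>Gm a 1) = ?h x" using G_ge[OF a] by simp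
    qed
    finally show ?thesis .
  qed
  have E2: "(\<integral>y. case_prod f2 y \<partial>Q a) = (\<integral>z. ?h z \<partial>Gm a 1)"
  proof -
    have "(\<integral>y. case_prod f2 y \<partial>Q a) = (\<integral>y. (\<integral>x. f2 x y \<partial>Gm a 1) \<partial>Gm a 1)"
      using PS.integral_snd[of f2] I2 QG by simp
    also have "\<dots> = (\<integral>z. ?h z \<partial>Gm a 1)"
    proof (rule Bochner_Integration.integral_cong[OF refl])
      fix y
      have "(\<integral>x. f2 x y \<partial>Gm a 1) = (\<integral>x. ln y * indicator {y<..} x \<partial>Gm a 1)"
        by (rule Bochner_Integration.integral_cong) (auto simp: f2_def indicator_def)
      also have "\<dots> = ln y * measure (Gm a 1) {y<..}" by simp
      finally show "(\<integral>x. f2 x y \<partial>Gm a 1) = ?h y" using G_gt[OF a] by simp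
    qed
    finally show ?thesis .
  qed
  have E3: "(\<integral>z. ?h z \<partial>Gm a 1) = (LBINT z:{0<..}. ln z * (1 - G_std a z) * g_std a z)"
  proof -
    have "(\<integral>z. ?h z \<partial>Gm a 1) = (\<integral>z. gamma_dens a 1 z *\<^sub>R ?h z \<partial>lborel)"
      unfolding Gm_def using a by (intro integral_density) (auto simp: gamma_dens_nonneg)
    also have "\<dots> = (LBINT z:{0<..}. ln z * (1 - G_std a z) * g_std a z)"
      unfolding set_lebesgue_integral_def
      by (rule Bochner_Integration.integral_cong) (auto simp: g_std_def gamma_dens_def indicator_def)
    finally show ?thesis .
  qed
  show ?thesis unfolding split E1 E2 E3 c3_def by simp
qed




lemma sq_cmp:
  fixes b c m :: real
  assumes "(b < c \<and> (b + c) / 2 < m) \<or> (c < b \<and> m < (b + c) / 2)"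
  shows "(c - m)\<^sup>2 < (b - m)\<^sup>2"
proof -
  have e: "(b - m)\<^sup>2 - (c - m)\<^sup>2 = (b - c) * (b + c - 2 * m)" by (simp add: power2_eq_square algebra_simps)
  have "0 < (b - c) * (b + c - 2 * m)"
    using assms by (auto intro: mult_neg_neg mult_pos_pos)
  then show ?thesis using e by linarith
qed

lemma one_one_Theta: "(1, 1) \<in> Theta" by (simp add: Theta_def)
lemma one_n_Theta: "(1, real (Suc n)) \<in> Theta" by (simp add: Theta_def)

lemma mW_bounds:
  assumes a: "0 < a" and t: "t \<in> Theta"
  shows "c3 a \<le> mW a t" "mW a t \<le> c1 a"
  using mW_ge[OF a, of t] c3_eq[OF a] mW_le_c1[OF a t] by auto

lemma mW_one: "0 < a \<Longrightarrow> mW a (1,1) = c3 a"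
  using mW_11 c3_eq by simp

lemma est_dc: "estimator (d_c c)"
  unfolding estimator_def d_c_def by measurable

lemma part3:
  assumes a: "0 < a" and bc: "(b < c \<and> c \<le> c3 a) \<or> (c1 a \<le> c \<and> c < b)" and t: "t \<in> Theta"
  shows "risk a t (d_c c) < risk a t (d_c b)"
  unfolding risk_less[OF a t]
  by (rule sq_cmp) (use bc mW_bounds[OF a t] in auto)

theorem theorem3p1:
  fixes \<alpha> :: real
  assumes "0 < \<alpha>"
  shows "(\<forall>c \<in> {c3 \<alpha> .. c1 \<alpha>}. admissible_within_M1 \<alpha> (d_c c))
    \<and> (\<forall>c. c < c3 \<alpha> \<or> c1 \<alpha> < c \<longrightarrow> inadmissible \<alpha> (d_c c))
    \<and> (\<forall>b c. (b < c \<and> c \<le> c3 \<alpha>) \<or> (c1 \<alpha> \<le> c \<and> c < b) \<longrightarrow>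
          (\<forall>\<theta>\<in>Theta. risk \<alpha> \<theta> (d_c c) < risk \<alpha> \<theta> (d_c b)))"
proof (intro conjI allI ballI impI)
  note a = assms
  fix b c \<theta>
  assume "(b < c \<and> c \<le> c3 \<alpha>) \<or> (c1 \<alpha> \<le> c \<and> c < b)" "\<theta> \<in> Theta"
  then show "risk \<alpha> \<theta> (d_c c) < risk \<alpha> \<theta> (d_c b)" by (rule part3[OF a])
next
  note a = assms
  fix c assume c: "c < c3 \<alpha> \<or> c1 \<alpha> < c"
  show "inadmissible \<alpha> (d_c c)"
  proof (cases "c < c3 \<alpha>")
    case True
    have "dominates \<alpha> (d_c (c3 \<alpha>)) (d_c c)"
      unfolding dominates_def
      using part3[OF a, of c "c3 \<alpha>"] True one_one_Theta by (auto intro: less_imp_le)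
    then show ?thesis unfolding inadmissible_def using est_dc by blast
  next
    case False
    then have c': "c1 \<alpha> < c" using c by simp
    have "dominates \<alpha> (d_c (c1 \<alpha>)) (d_c c)"
      unfolding dominates_def
      using part3[OF a, of c "c1 \<alpha>"] c' one_one_Theta by (auto intro: less_imp_le)
    then show ?thesis unfolding inadmissible_def using est_dc by blast
  qed
next
  note a = assms
  fix c assume c: "c \<in> {c3 \<alpha> .. c1 \<alpha>}"
  show "admissible_within_M1 \<alpha> (d_c c)"
    unfolding admissible_within_M1_def
  proof (intro conjI)
    show "d_c c \<in> M1" by (simp add: M1_def)
    show "\<not> (\<exists>d'\<in>M1. dominates \<alpha> d' (d_c c))"
    proof
      assume "\<exists>d'\<in>M1. dominates \<alpha> d' (d_c c)"
      then obtain b where dom: "dominates \<alpha> (d_c b) (d_c c)" by (auto simp: M1_def)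
      then have le: "\<And>t. t \<in> Theta \<Longrightarrow> risk \<alpha> t (d_c b) \<le> risk \<alpha> t (d_c c)"
        and ex: "\<exists>t\<in>Theta. risk \<alpha> t (d_c b) < risk \<alpha> t (d_c c)"
        unfolding dominates_def by auto
      have "\<exists>t\<in>Theta. risk \<alpha> t (d_c c) < risk \<alpha> t (d_c b)"
      proof (cases b c rule: linorder_cases)
        case equal then show ?thesis using ex by auto
      next
        case greater
        have "risk \<alpha> (1,1) (d_c c) < risk \<alpha> (1,1) (d_c b)"
          unfolding risk_less[OF a one_one_Theta]
          by (rule sq_cmp) (use greater c mW_one[OF a] in auto)
        then show ?thesis using one_one_Theta by blast
      next
        case less
        have "(b + c) / 2 < c1 \<alpha>" using less c by auto
        from order_tendstoD(1)[OF mW_lim[OF a] this]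
        obtain n where n: "(b + c) / 2 < mW \<alpha> (1, real (Suc n))"
          by (auto simp: eventually_sequentially)
        have "risk \<alpha> (1, real (Suc n)) (d_c c) < risk \<alpha> (1, real (Suc n)) (d_c b)"
          unfolding risk_less[OF a one_n_Theta]
          by (rule sq_cmp) (use less n in auto)
        then show ?thesis using one_n_Theta by blast
      qed
      then show False using le by (auto simp: not_le[symmetric])
    qed
  qed
qed


end
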